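(* Let $R$ be a number ring and $I$ an ideal of $R$. For every integer $d\geq 2$ the following are equivalent: (1) the $R$-ideal $I$ can be generated by $d$ elements; (2) for every maximal ideal $\mathfrak p$ of $R$, the $R_{\mathfrak p}$-ideal $I_{\mathfrak p}$ can be generated by $d$ elements.
   Context: A number ring is a subring of a number field (a finite extension of $\mathbb{Q}$). $R_{\mathfrak p}$, $I_{\mathfrak p}$ denote localizations at $\mathfrak p$. *)

theory Defs
  imports Complex_Main
begin

text \<open>Every number field embeds into the complex numbers, so number rings are
  modelled (up to isomorphism) as subrings of subfields of the complex numbers
  of finite dimension over the rationals.\<close>

definition subring_c :: "complex set \<Rightarrow> bool" where
  "subring_c R \<longleftrightarrow> 1 \<in> R \<and> (\<forall>x\<in>R. \<forall>y\<in>R. x + y \<in> R \<and> x - y \<in> R \<and> x * y \<in> R)"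

definition subfield_c :: "complex set \<Rightarrow> bool" where
  "subfield_c K \<longleftrightarrow> subring_c K \<and> (\<forall>x\<in>K. x \<noteq> 0 \<longrightarrow> inverse x \<in> K)"

definition number_field_c :: "complex set \<Rightarrow> bool" where
  "number_field_c K \<longleftrightarrow> subfield_c K \<and>
     (\<exists>B. finite B \<and> B \<subseteq> K \<and> (\<forall>x\<in>K. \<exists>c. x = (\<Sum>b\<in>B. of_rat (c b) * b)))"

definition number_ring :: "complex set \<Rightarrow> bool" where
  "number_ring R \<longleftrightarrow> subring_c R \<and> (\<exists>K. number_field_c K \<and> R \<subseteq> K)"

definition ideal_c :: "complex set \<Rightarrow> complex set \<Rightarrow> bool" where
  "ideal_c R I \<longleftrightarrow> I \<subseteq> R \<and> 0 \<in> I \<and> (\<forall>x\<in>I. \<forall>y\<in>I. x + y \<in> I)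
      \<and> (\<forall>r\<in>R. \<forall>x\<in>I. r * x \<in> I)"

definition maximal_ideal_c :: "complex set \<Rightarrow> complex set \<Rightarrow> bool" where
  "maximal_ideal_c R P \<longleftrightarrow> ideal_c R P \<and> P \<noteq> R \<and>
     (\<forall>J. ideal_c R J \<and> P \<subseteq> J \<longrightarrow> J = P \<or> J = R)"

definition gen_by :: "complex set \<Rightarrow> complex set \<Rightarrow> nat \<Rightarrow> bool" where
  "gen_by R I d \<longleftrightarrow> (\<exists>x :: nat \<Rightarrow> complex.
      I = {(\<Sum>i<d. r i * x i) | r. \<forall>i<d. r i \<in> R})"

definition loc :: "complex set \<Rightarrow> complex set \<Rightarrow> complex set \<Rightarrow> complex set" where
  "loc R P A = {a / s | a s. a \<in> A \<and> s \<in> R \<and> s \<notin> P}"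

end

theory Submission
  imports Defs "HOL-Computational_Algebra.Primes"
begin


lemma sr_one: "subring_c R \<Longrightarrow> 1 \<in> R" by (simp add: subring_c_def)
lemma sr_add: "subring_c R \<Longrightarrow> x \<in> R \<Longrightarrow> y \<in> R \<Longrightarrow> x + y \<in> R" by (simp add: subring_c_def)
lemma sr_diff: "subring_c R \<Longrightarrow> x \<in> R \<Longrightarrow> y \<in> R \<Longrightarrow> x - y \<in> R" by (simp add: subring_c_def)
lemma sr_mult: "subring_c R \<Longrightarrow> x \<in> R \<Longrightarrow> y \<in> R \<Longrightarrow> x * y \<in> R" by (simp add: subring_c_def)
lemma sr_zero: "subring_c R \<Longrightarrow> 0 \<in> R" by (metis sr_diff sr_one diff_self)
lemma sr_neg: "subring_c R \<Longrightarrow> x \<in> R \<Longrightarrow> - x \<in> R" by (metis sr_diff sr_zero diff_0)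

lemma sr_of_nat: "subring_c R \<Longrightarrow> of_nat n \<in> R"
  by (induction n) (auto simp: sr_zero sr_one sr_add)
lemma sr_of_int: "subring_c R \<Longrightarrow> of_int k \<in> R"
  by (cases k rule: int_cases) (auto simp: sr_of_nat sr_neg simp del: of_nat_Suc)

lemma sr_sum: "subring_c R \<Longrightarrow> (\<And>i. i \<in> F \<Longrightarrow> f i \<in> R) \<Longrightarrow> sum f F \<in> R"
  by (induction F rule: infinite_finite_induct) (auto simp: sr_zero sr_add)
lemma sr_prod: "subring_c R \<Longrightarrow> (\<And>i. i \<in> F \<Longrightarrow> f i \<in> R) \<Longrightarrow> prod f F \<in> R"
  by (induction F rule: infinite_finite_induct) (auto simp: sr_one sr_mult)
lemma sr_pow: "subring_c R \<Longrightarrow> x \<in> R \<Longrightarrow> x ^ n \<in> R"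
  by (induction n) (auto simp: sr_one sr_mult)

lemma id_sub: "ideal_c R I \<Longrightarrow> x \<in> I \<Longrightarrow> x \<in> R" by (auto simp: ideal_c_def)
lemma id_zero: "ideal_c R I \<Longrightarrow> 0 \<in> I" by (auto simp: ideal_c_def)
lemma id_add: "ideal_c R I \<Longrightarrow> x \<in> I \<Longrightarrow> y \<in> I \<Longrightarrow> x + y \<in> I" by (auto simp: ideal_c_def)
lemma id_lmult: "ideal_c R I \<Longrightarrow> r \<in> R \<Longrightarrow> x \<in> I \<Longrightarrow> r * x \<in> I" by (auto simp: ideal_c_def)
lemma id_rmult: "ideal_c R I \<Longrightarrow> r \<in> R \<Longrightarrow> x \<in> I \<Longrightarrow> x * r \<in> I"
  by (metis id_lmult mult.commute)
lemma id_neg: "subring_c R \<Longrightarrow> ideal_c R I \<Longrightarrow> x \<in> I \<Longrightarrow> - x \<in> I"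
  using id_lmult[of R I "-1" x] sr_neg[OF _ sr_one] by auto
lemma id_diff: "subring_c R \<Longrightarrow> ideal_c R I \<Longrightarrow> x \<in> I \<Longrightarrow> y \<in> I \<Longrightarrow> x - y \<in> I"
  using id_add[of R I x "-y"] id_neg by auto
lemma id_sum: "ideal_c R I \<Longrightarrow> (\<And>i. i \<in> F \<Longrightarrow> f i \<in> I) \<Longrightarrow> sum f F \<in> I"
  by (induction F rule: infinite_finite_induct) (auto simp: id_zero id_add)
lemma id_one: "ideal_c R I \<Longrightarrow> 1 \<in> I \<Longrightarrow> I = R"
  by (auto simp: ideal_c_def) (metis mult.right_neutral)

section \<open>Maximal ideals\<close>

lemma max_ideal: "maximal_ideal_c R P \<Longrightarrow> ideal_c R P" by (simp add: maximal_ideal_c_def)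

lemma max_one: "subring_c R \<Longrightarrow> maximal_ideal_c R P \<Longrightarrow> 1 \<notin> P"
  using id_one maximal_ideal_c_def by blast

lemma max_comax:
  assumes R: "subring_c R" and P: "maximal_ideal_c R P" and s: "s \<in> R" "s \<notin> P"
  shows "\<exists>p\<in>P. \<exists>r\<in>R. 1 = p + r * s"
proof -
  define J where "J = {p + r * s | p r. p \<in> P \<and> r \<in> R}"
  have PI: "ideal_c R P" using P by (simp add: maximal_ideal_c_def)
  have sub: "J \<subseteq> R"
  proof
    fix x assume "x \<in> J"
    then obtain p r where 1: "x = p + r * s" "p \<in> P" "r \<in> R" unfolding J_def by blast
    show "x \<in> R" unfolding 1(1) by (intro sr_add[OF R] sr_mult[OF R] id_sub[OF PI] 1 s)
  qed
  have mem: "p + r * s \<in> J" if "p \<in> P" "r \<in> R" for p r using that unfolding J_def by blast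
  have z: "0 \<in> J" using mem[OF id_zero[OF PI] sr_zero[OF R]] by simp
  have ad: "x + y \<in> J" if xJ: "x \<in> J" and yJ: "y \<in> J" for x y
  proof -
    obtain p r where 1: "x = p + r * s" "p \<in> P" "r \<in> R" using xJ unfolding J_def by blast
    obtain p' r' where 2: "y = p' + r' * s" "p' \<in> P" "r' \<in> R" using yJ unfolding J_def by blast
    have "x + y = (p + p') + (r + r') * s" using 1 2 by (simp add: algebra_simps)
    moreover have "p + p' \<in> P" using id_add[OF PI 1(2) 2(2)] .
    moreover have "r + r' \<in> R" using sr_add[OF R 1(3) 2(3)] .
    ultimately show ?thesis unfolding J_def by blast
  qed
  have mu: "t * x \<in> J" if tR: "t \<in> R" and xJ: "x \<in> J" for t x
  proof -
    obtain p r where 1: "x = p + r * s" "p \<in> P" "r \<in> R" using xJ unfolding J_def by blast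
    have "t * x = (t * p) + (t * r) * s" using 1 by (simp add: algebra_simps)
    moreover have "t * p \<in> P" using id_lmult[OF PI tR 1(2)] .
    moreover have "t * r \<in> R" using sr_mult[OF R tR 1(3)] .
    ultimately show ?thesis unfolding J_def by blast
  qed
  have "ideal_c R J" unfolding ideal_c_def using sub z ad mu by blast
  moreover have "P \<subseteq> J" using mem[OF _ sr_zero[OF R]] by force
  moreover have "s \<in> J" using mem[OF id_zero[OF PI] sr_one[OF R]] by simp
  ultimately have "J = P \<or> J = R" using P unfolding maximal_ideal_c_def by blast
  then have "J = R" using s \<open>s \<in> J\<close> by blast
  then have "1 \<in> J" using sr_one[OF R] by simp
  then show ?thesis unfolding J_def by auto
qed

lemma max_prime:
  assumes R: "subring_c R" and P: "maximal_ideal_c R P" and s: "s \<in> R" "s \<notin> P"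
    and t: "t \<in> R" "t \<notin> P"
  shows "s * t \<notin> P"
proof
  assume st: "s * t \<in> P"
  obtain p r where "p \<in> P" "r \<in> R" "1 = p + r * s" using max_comax[OF R P s] by blast
  then have "t = t * p + r * (s * t)" by (metis mult.commute mult.left_neutral mult.assoc distrib_left)
  moreover have "t * p \<in> P" "r * (s * t) \<in> P"
    using P \<open>p \<in> P\<close> \<open>r \<in> R\<close> st t by (auto intro: id_lmult id_rmult max_ideal)
  ultimately have "t \<in> P" using P by (metis id_add max_ideal)
  then show False using t by simp
qed

lemma max_prime': "subring_c R \<Longrightarrow> maximal_ideal_c R P \<Longrightarrow> s \<in> R \<Longrightarrow> t \<in> R \<Longrightarrow> s * t \<in> P
   \<Longrightarrow> s \<in> P \<or> t \<in> P"
  using max_prime by blast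

lemma max_prod_notin:
  assumes R: "subring_c R" and P: "maximal_ideal_c R P"
  shows "(\<And>i. i \<in> F \<Longrightarrow> f i \<in> R \<and> f i \<notin> P) \<Longrightarrow> prod f F \<notin> P \<and> prod f F \<in> R"
proof (induction F rule: infinite_finite_induct)
  case (infinite A) then show ?case using max_one[OF R P] sr_one[OF R] by simp
next
  case empty then show ?case using max_one[OF R P] sr_one[OF R] by simp
next
  case (insert x F) then show ?case using max_prime[OF R P] sr_mult[OF R] by auto
qed

lemma max_distinct:
  assumes R: "subring_c R" and P: "maximal_ideal_c R P" and Q: "maximal_ideal_c R Q" and "P \<noteq> Q"
  shows "\<exists>a\<in>P. \<exists>b\<in>Q. a + b = 1"
proof -
  have "\<not> Q \<subseteq> P"
  proof
    assume "Q \<subseteq> P"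
    then have "P = Q \<or> P = R" using Q P unfolding maximal_ideal_c_def by blast
    then show False using \<open>P \<noteq> Q\<close> P unfolding maximal_ideal_c_def by blast
  qed
  then obtain s where s: "s \<in> Q" "s \<notin> P" by blast
  then have "s \<in> R" using Q id_sub max_ideal by blast
  obtain p r where "p \<in> P" "r \<in> R" "1 = p + r * s" using max_comax[OF R P \<open>s \<in> R\<close> s(2)] by blast
  moreover have "r * s \<in> Q" using id_lmult[OF max_ideal[OF Q] \<open>r \<in> R\<close> s(1)] .
  ultimately show ?thesis by auto
qed

lemma crt_aux:
  assumes R: "subring_c R" and P: "maximal_ideal_c R P"
  shows "(\<And>Q. Q \<in> F \<Longrightarrow> b Q \<in> R \<and> 1 - b Q \<in> P) \<Longrightarrow> 1 - prod b F \<in> P"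
proof (induction F rule: infinite_finite_induct)
  case (infinite A) then show ?case using P max_ideal id_zero by fastforce
next
  case empty then show ?case using P max_ideal id_zero by fastforce
next
  case (insert x F)
  have e: "1 - prod b (insert x F) = (1 - b x) + b x * (1 - prod b F)"
    using insert(1,2) by (simp add: algebra_simps)
  show ?case unfolding e using insert P
    by (intro id_add[OF max_ideal[OF P]] id_lmult[OF max_ideal[OF P]]) auto
qed

lemma crt:
  assumes R: "subring_c R" and T: "finite T" "\<And>Q. Q \<in> T \<Longrightarrow> maximal_ideal_c R Q" and P: "P \<in> T"
  shows "\<exists>e\<in>R. 1 - e \<in> P \<and> (\<forall>Q\<in>T. Q \<noteq> P \<longrightarrow> e \<in> Q)"
proof -
  have "\<forall>Q\<in>T - {P}. \<exists>b. b \<in> Q \<and> 1 - b \<in> P"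
  proof
    fix Q assume "Q \<in> T - {P}"
    then obtain a b where "a \<in> P" "b \<in> Q" "a + b = 1" using max_distinct[OF R T(2)[OF P] T(2)] by blast
    then show "\<exists>b. b \<in> Q \<and> 1 - b \<in> P" by (metis add_diff_cancel_right')
  qed
  then obtain b where b: "\<And>Q. Q \<in> T - {P} \<Longrightarrow> b Q \<in> Q \<and> 1 - b Q \<in> P" by metis
  have bR: "\<And>Q. Q \<in> T - {P} \<Longrightarrow> b Q \<in> R" using b T(2) id_sub max_ideal by blast
  define e where "e = prod b (T - {P})"
  have "e \<in> R" unfolding e_def by (rule sr_prod[OF R]) (use bR in auto)
  moreover have "1 - e \<in> P" unfolding e_def
    by (rule crt_aux[OF R T(2)[OF P]]) (use b bR in auto)
  moreover have "e \<in> Q" if "Q \<in> T" "Q \<noteq> P" for Q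
  proof -
    have "Q \<in> T - {P}" using that by simp
    then have "e = b Q * prod b (T - {P} - {Q})" unfolding e_def
      using T(1) by (simp add: prod.remove)
    moreover have "prod b (T - {P} - {Q}) \<in> R" by (rule sr_prod[OF R]) (use bR in auto)
    moreover have "b Q \<in> Q" using b \<open>Q \<in> T - {P}\<close> by blast
    ultimately show ?thesis using id_rmult[OF max_ideal[OF T(2)[OF that(1)]]] by metis
  qed
  ultimately show ?thesis by blast
qed

lemma crt_fun:
  assumes R: "subring_c R" and T: "finite T" "\<And>Q. Q \<in> T \<Longrightarrow> maximal_ideal_c R Q"
  shows "\<exists>E. \<forall>P\<in>T. E P \<in> R \<and> 1 - E P \<in> P \<and> (\<forall>Q\<in>T. Q \<noteq> P \<longrightarrow> E P \<in> Q)"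
  using crt[OF R T] by metis



definition spanA :: "complex set \<Rightarrow> (nat \<Rightarrow> complex) \<Rightarrow> nat \<Rightarrow> complex set" where
  "spanA A x d = {(\<Sum>i<d. r i * x i) | r. \<forall>i<d. r i \<in> A}"

definition amod :: "complex set \<Rightarrow> complex set \<Rightarrow> bool" where
  "amod A N \<longleftrightarrow> 0 \<in> N \<and> (\<forall>x\<in>N. \<forall>y\<in>N. x + y \<in> N) \<and> (\<forall>a\<in>A. \<forall>x\<in>N. a * x \<in> N)"

lemma gen_by_spanA: "gen_by R I d \<longleftrightarrow> (\<exists>x. I = spanA R x d)"
  by (simp add: gen_by_def spanA_def)

lemma amod_sum: "amod A N \<Longrightarrow> (\<And>i. i \<in> F \<Longrightarrow> f i \<in> N) \<Longrightarrow> sum f F \<in> N"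
  by (induction F rule: infinite_finite_induct) (auto simp: amod_def)

lemma amod_mult: "amod A N \<Longrightarrow> a \<in> A \<Longrightarrow> x \<in> N \<Longrightarrow> a * x \<in> N"
  by (simp add: amod_def)
lemma amod_add: "amod A N \<Longrightarrow> x \<in> N \<Longrightarrow> y \<in> N \<Longrightarrow> x + y \<in> N"
  by (simp add: amod_def)
lemma amod_zero: "amod A N \<Longrightarrow> 0 \<in> N"
  by (simp add: amod_def)

lemma spanA_mem: "(\<And>i. i < d \<Longrightarrow> r i \<in> A) \<Longrightarrow> (\<Sum>i<d. r i * x i) \<in> spanA A x d"
  unfolding spanA_def by blast

lemma spanA_sub: "amod A N \<Longrightarrow> (\<And>i. i < d \<Longrightarrow> x i \<in> N) \<Longrightarrow> spanA A x d \<subseteq> N"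
  unfolding spanA_def by (auto intro!: amod_sum amod_mult)

lemma amod_spanA:
  assumes A: "subring_c A" shows "amod A (spanA A x d)"
  unfolding amod_def
proof (intro conjI ballI)
  show "0 \<in> spanA A x d" using spanA_mem[of d "\<lambda>_. 0" A x] sr_zero[OF A] by simp
next
  fix u v assume "u \<in> spanA A x d" "v \<in> spanA A x d"
  then obtain r r' where "u = (\<Sum>i<d. r i * x i)" "\<forall>i<d. r i \<in> A" "v = (\<Sum>i<d. r' i * x i)" "\<forall>i<d. r' i \<in> A"
    unfolding spanA_def by blast
  then have "u + v = (\<Sum>i<d. (r i + r' i) * x i)" "\<forall>i<d. r i + r' i \<in> A"
    by (auto simp: sum.distrib distrib_right intro: sr_add[OF A])
  then show "u + v \<in> spanA A x d" using spanA_mem[of d "\<lambda>i. r i + r' i" A x] by simp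
next
  fix a u assume "a \<in> A" "u \<in> spanA A x d"
  then obtain r where "u = (\<Sum>i<d. r i * x i)" "\<forall>i<d. r i \<in> A"
    unfolding spanA_def by blast
  then have "a * u = (\<Sum>i<d. (a * r i) * x i)" "\<forall>i<d. a * r i \<in> A"
    using \<open>a \<in> A\<close> by (auto simp: sum_distrib_left mult.assoc intro: sr_mult[OF A])
  then show "a * u \<in> spanA A x d" using spanA_mem[of d "\<lambda>i. a * r i" A x] by simp
qed

lemma spanA_gen:
  assumes A: "subring_c A" and "j < d" shows "x j \<in> spanA A x d"
proof -
  have "(\<Sum>i<d. (if i = j then 1 else 0) * x i) = x j"
  proof -
    have "(\<Sum>i<d. (if i = j then 1 else 0) * x i) = (\<Sum>i<d. if i = j then x i else 0)"
      by (rule sum.cong) auto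
    also have "\<dots> = x j" using assms(2) by simp
    finally show ?thesis .
  qed
  moreover have "(\<Sum>i<d. (if i = j then 1 else 0) * x i) \<in> spanA A x d"
    by (rule spanA_mem) (auto simp: sr_one[OF A] sr_zero[OF A])
  ultimately show ?thesis by simp
qed

lemma spanA_mono_gen:
  assumes A: "subring_c A" and "\<And>i. i < d \<Longrightarrow> x i \<in> spanA A y e"
  shows "spanA A x d \<subseteq> spanA A y e"
  using spanA_sub[OF amod_spanA[OF A]] assms(2) by blast

section \<open>Nakayama\<close>

lemma rearr: "(y::complex) = a + (s + t * y) + q * y \<Longrightarrow> y = (a + s) + (t + q) * y"
  by (simp add: algebra_simps)

lemma rearr2: "(y::complex) = n + c * y \<Longrightarrow> (1 - c) * y = n"
  by (simp add: algebra_simps)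

lemma nakayama:
  assumes A: "subring_c A" and M: "amod A M" "M \<subseteq> A" and U: "\<And>q. q \<in> M \<Longrightarrow> \<exists>w\<in>A. w * (1 - q) = 1"
  shows "amod A N \<Longrightarrow> (\<And>i. i < d \<Longrightarrow> \<exists>a\<in>N. \<exists>b\<in>spanA M y d. y i = a + b) \<Longrightarrow> i < d \<Longrightarrow> y i \<in> N"
proof (induction d arbitrary: N i)
  case 0
  then show ?case by simp
next
  case (Suc d)
  define N2 where "N2 = {a + r * y d | a r. a \<in> N \<and> r \<in> A}"
  have N2mem: "a + r * y d \<in> N2" if "a \<in> N" "r \<in> A" for a r using that unfolding N2_def by blast
  have N2: "amod A N2" unfolding amod_def
  proof (intro conjI ballI)
    show "0 \<in> N2" using N2mem[OF amod_zero[OF Suc.prems(1)] sr_zero[OF A]] by simp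
  next
    fix u v assume "u \<in> N2" "v \<in> N2"
    then obtain a r a' r' where "u = a + r * y d" "a \<in> N" "r \<in> A" "v = a' + r' * y d" "a' \<in> N" "r' \<in> A"
      unfolding N2_def by blast
    then show "u + v \<in> N2"
      using N2mem[of "a + a'" "r + r'"] amod_add[OF Suc.prems(1)] sr_add[OF A] by (simp add: algebra_simps)
  next
    fix t u assume "t \<in> A" "u \<in> N2"
    then obtain a r where "u = a + r * y d" "a \<in> N" "r \<in> A" unfolding N2_def by blast
    then show "t * u \<in> N2"
      using N2mem[of "t * a" "t * r"] amod_mult[OF Suc.prems(1) \<open>t \<in> A\<close>] sr_mult[OF A \<open>t \<in> A\<close>]
      by (simp add: algebra_simps)
  qed
  have low: "y j \<in> N2" if "j < d" for j
  proof (rule Suc.IH[OF N2 _ that])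
    fix i assume "i < d"
    then obtain a b where ab: "a \<in> N" "b \<in> spanA M y (Suc d)" "y i = a + b" using Suc.prems(2)[of i] by auto
    then obtain q where q: "b = (\<Sum>l<Suc d. q l * y l)" "\<forall>l<Suc d. q l \<in> M" unfolding spanA_def by blast
    have "y i = (a + q d * y d) + (\<Sum>l<d. q l * y l)" using ab q by simp
    moreover have "a + q d * y d \<in> N2" using N2mem[OF ab(1)] q(2) M(2) by blast
    moreover have "(\<Sum>l<d. q l * y l) \<in> spanA M y d" using q(2) by (intro spanA_mem) simp
    ultimately show "\<exists>a\<in>N2. \<exists>b\<in>spanA M y d. y i = a + b" by blast
  qed
  then have "\<forall>j. \<exists>ar. j < d \<longrightarrow> fst ar \<in> N \<and> snd ar \<in> A \<and> y j = fst ar + snd ar * y d"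
    unfolding N2_def by force
  then obtain ar where ar: "\<And>j. j < d \<Longrightarrow> fst (ar j) \<in> N \<and> snd (ar j) \<in> A \<and> y j = fst (ar j) + snd (ar j) * y d"
    by metis
  define aa where "aa j = fst (ar j)" for j
  define rr where "rr j = snd (ar j)" for j
  have arr: "\<And>j. j < d \<Longrightarrow> aa j \<in> N \<and> rr j \<in> A \<and> y j = aa j + rr j * y d"
    using ar unfolding aa_def rr_def by blast
  have top: "y d \<in> N"
  proof -
    obtain a b where ab: "a \<in> N" "b \<in> spanA M y (Suc d)" "y d = a + b" using Suc.prems(2)[of d] by auto
    then obtain q where q: "b = (\<Sum>l<Suc d. q l * y l)" "\<forall>l<Suc d. q l \<in> M" unfolding spanA_def by blast
    have sid: "(\<Sum>l<d. q l * y l) = (\<Sum>l<d. q l * aa l) + (\<Sum>l<d. q l * rr l) * y d"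
    proof -
      have "(\<Sum>l<d. q l * y l) = (\<Sum>l<d. q l * aa l + (q l * rr l) * y d)"
      proof (rule sum.cong[OF refl])
        fix l assume "l \<in> {..<d}"
        then have "y l = aa l + rr l * y d" using arr[of l] by blast
        then show "q l * y l = q l * aa l + (q l * rr l) * y d" by (simp add: distrib_left mult.assoc)
      qed
      also have "\<dots> = (\<Sum>l<d. q l * aa l) + (\<Sum>l<d. q l * rr l) * y d"
        by (simp add: sum.distrib sum_distrib_right)
      finally show ?thesis .
    qed
    have bs: "b = (\<Sum>l<d. q l * y l) + q d * y d" using q(1) by simp
    have e1: "y d = a + (\<Sum>l<d. q l * y l) + q d * y d" using ab(3) bs by (metis add.assoc)
    have eq: "y d = (a + (\<Sum>l<d. q l * aa l)) + ((\<Sum>l<d. q l * rr l) + q d) * y d"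
      using rearr[OF e1[unfolded sid]] .
    define c where "c = (\<Sum>l<d. q l * rr l) + q d"
    have cM: "c \<in> M" unfolding c_def
      using q(2) arr by (intro amod_add[OF M(1)] amod_sum[OF M(1)]) (auto simp: mult.commute[of "q _"] intro!: amod_mult[OF M(1)])
    have nN: "a + (\<Sum>l<d. q l * aa l) \<in> N"
    proof (intro amod_add[OF Suc.prems(1)] amod_sum[OF Suc.prems(1)] ab(1))
      fix l assume "l \<in> {..<d}"
      then have "q l \<in> A" "aa l \<in> N" using q(2) arr[of l] M(2) by auto
      then show "q l * aa l \<in> N" using amod_mult[OF Suc.prems(1)] by blast
    qed
    obtain w where w: "w \<in> A" "w * (1 - c) = 1" using U[OF cM] by blast
    have "(1 - c) * y d = a + (\<Sum>l<d. q l * aa l)" using rearr2[OF eq[unfolded c_def[symmetric]]] .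
    then have "y d = w * (a + (\<Sum>l<d. q l * aa l))" using w(2)
      by (metis mult.assoc mult_1)
    then show ?thesis using amod_mult[OF Suc.prems(1) w(1) nN] by simp
  qed
  show ?case
  proof (cases "i = d")
    case True then show ?thesis using top by simp
  next
    case False
    then have "i < d" using Suc.prems(3) by simp
    then have "y i = aa i + rr i * y d" "aa i \<in> N" "rr i \<in> A" using arr by auto
    then show ?thesis using top amod_add[OF Suc.prems(1)] amod_mult[OF Suc.prems(1)] by simp
  qed
qed



section \<open>Localization\<close>

lemma loc_mem: "a \<in> X \<Longrightarrow> s \<in> R \<Longrightarrow> s \<notin> P \<Longrightarrow> a / s \<in> loc R P X"
  unfolding loc_def by blast

lemma loc_elim: "z \<in> loc R P X \<Longrightarrow> \<exists>a s. a \<in> X \<and> s \<in> R \<and> s \<notin> P \<and> z = a / s"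
  unfolding loc_def by blast

lemma notinP_nz: "maximal_ideal_c R P \<Longrightarrow> s \<notin> P \<Longrightarrow> s \<noteq> (0::complex)"
  using id_zero max_ideal by blast

lemma loc_incl: "subring_c R \<Longrightarrow> maximal_ideal_c R P \<Longrightarrow> X \<subseteq> loc R P X"
proof
  fix x assume "subring_c R" "maximal_ideal_c R P" "x \<in> X"
  then show "x \<in> loc R P X" using loc_mem[of x X 1 R P] sr_one max_one by auto
qed

lemma loc_mono: "X \<subseteq> Y \<Longrightarrow> loc R P X \<subseteq> loc R P Y"
  unfolding loc_def by blast

lemma loc_subring:
  assumes R: "subring_c R" and P: "maximal_ideal_c R P"
  shows "subring_c (loc R P R)"
  unfolding subring_c_def
proof (intro conjI ballI)
  show "1 \<in> loc R P R" using loc_incl[OF R P] sr_one[OF R] by blast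
next
  fix x y assume "x \<in> loc R P R" "y \<in> loc R P R"
  then obtain a s b t where ab: "a \<in> R" "s \<in> R" "s \<notin> P" "x = a / s" "b \<in> R" "t \<in> R" "t \<notin> P" "y = b / t"
    using loc_elim by metis
  have nz: "s \<noteq> 0" "t \<noteq> 0" using ab notinP_nz[OF P] by auto
  have st: "s * t \<in> R" "s * t \<notin> P" using ab sr_mult[OF R] max_prime[OF R P] by auto
  have "x + y = (a * t + b * s) / (s * t)" using nz ab by (simp add: field_simps)
  moreover have "a * t + b * s \<in> R" using ab by (intro sr_add[OF R] sr_mult[OF R])
  ultimately show "x + y \<in> loc R P R" using loc_mem st by metis
  have "x - y = (a * t - b * s) / (s * t)" using nz ab by (simp add: field_simps)
  moreover have "a * t - b * s \<in> R" using ab by (intro sr_diff[OF R] sr_mult[OF R])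
  ultimately show "x - y \<in> loc R P R" using loc_mem st by metis
  have "x * y = (a * b) / (s * t)" using nz ab by (simp add: field_simps)
  moreover have "a * b \<in> R" using ab by (intro sr_mult[OF R])
  ultimately show "x * y \<in> loc R P R" using loc_mem st by metis
qed

lemma loc_div:
  assumes R: "subring_c R" and P: "maximal_ideal_c R P" and z: "z \<in> loc R P X" and u: "u \<in> R" "u \<notin> P"
    and X: "X \<subseteq> R"
  shows "z / u \<in> loc R P X"
proof -
  obtain a s where as: "a \<in> X" "s \<in> R" "s \<notin> P" "z = a / s" using loc_elim[OF z] by blast
  have "z / u = a / (s * u)" using as by simp
  moreover have "s * u \<in> R" "s * u \<notin> P" using as u sr_mult[OF R] max_prime[OF R P] by auto
  ultimately show ?thesis using loc_mem as(1) by metis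
qed

lemma loc_amod:
  assumes R: "subring_c R" and P: "maximal_ideal_c R P" and I: "ideal_c R I"
  shows "amod (loc R P R) (loc R P I)"
  unfolding amod_def
proof (intro conjI ballI)
  show "0 \<in> loc R P I" using loc_incl[OF R P] id_zero[OF I] by blast
next
  fix x y assume "x \<in> loc R P I" "y \<in> loc R P I"
  then obtain a s b t where ab: "a \<in> I" "s \<in> R" "s \<notin> P" "x = a / s" "b \<in> I" "t \<in> R" "t \<notin> P" "y = b / t"
    using loc_elim by metis
  have nz: "s \<noteq> 0" "t \<noteq> 0" using ab notinP_nz[OF P] by auto
  have st: "s * t \<in> R" "s * t \<notin> P" using ab sr_mult[OF R] max_prime[OF R P] by auto
  have "x + y = (a * t + b * s) / (s * t)" using nz ab by (simp add: field_simps)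
  moreover have "a * t + b * s \<in> I" using ab by (intro id_add[OF I] id_rmult[OF I])
  ultimately show "x + y \<in> loc R P I" using loc_mem st by metis
next
  fix x y assume "x \<in> loc R P R" "y \<in> loc R P I"
  then obtain a s b t where ab: "a \<in> R" "s \<in> R" "s \<notin> P" "x = a / s" "b \<in> I" "t \<in> R" "t \<notin> P" "y = b / t"
    using loc_elim by metis
  have st: "s * t \<in> R" "s * t \<notin> P" using ab sr_mult[OF R] max_prime[OF R P] by auto
  have "x * y = (a * b) / (s * t)" using ab by simp
  moreover have "a * b \<in> I" using ab by (intro id_lmult[OF I])
  ultimately show "x * y \<in> loc R P I" using loc_mem st by metis
qed

lemma loc_unit:
  assumes R: "subring_c R" and P: "maximal_ideal_c R P" and q: "q \<in> loc R P P"
  shows "\<exists>w\<in>loc R P R. w * (1 - q) = 1"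
proof -
  obtain p s where ps: "p \<in> P" "s \<in> R" "s \<notin> P" "q = p / s" using loc_elim[OF q] by blast
  have pR: "p \<in> R" using ps(1) P id_sub max_ideal by blast
  have sp: "s - p \<notin> P"
  proof
    assume "s - p \<in> P"
    then have "(s - p) + p \<in> P" using id_add[OF max_ideal[OF P]] ps(1) by blast
    then show False using ps(3) by simp
  qed
  have spR: "s - p \<in> R" using sr_diff[OF R ps(2) pR] .
  have nz: "s \<noteq> 0" "s - p \<noteq> 0" using notinP_nz[OF P ps(3)] notinP_nz[OF P sp] by auto
  have "s / (s - p) \<in> loc R P R" using loc_mem[OF ps(2) spR sp] .
  moreover have "s / (s - p) * (1 - q) = 1" using nz ps(4) by (simp add: field_simps)
  ultimately show ?thesis by blast
qed

lemma locP_amod: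
  assumes R: "subring_c R" and P: "maximal_ideal_c R P"
  shows "amod (loc R P R) (loc R P P)" "loc R P P \<subseteq> loc R P R"
proof -
  have "P \<subseteq> R" using id_sub max_ideal P by blast
  then show "amod (loc R P R) (loc R P P)" "loc R P P \<subseteq> loc R P R"
    using loc_amod[OF R P max_ideal[OF P]] loc_mono by auto
qed

lemma loc_gens:
  assumes R: "subring_c R" and P: "maximal_ideal_c R P" and I: "ideal_c R I"
    and g: "gen_by (loc R P R) (loc R P I) d"
  shows "\<exists>y. (\<forall>i<d. y i \<in> I) \<and> loc R P I \<subseteq> spanA (loc R P R) y d"
proof -
  let ?A = "loc R P R"
  have A: "subring_c ?A" using loc_subring[OF R P] .
  obtain w where w: "loc R P I = spanA ?A w d" using g gen_by_spanA by metis
  have "\<forall>i. \<exists>as. i < d \<longrightarrow> fst as \<in> I \<and> snd as \<in> R \<and> snd as \<notin> P \<and> w i = fst as / snd as"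
  proof
    fix i show "\<exists>as. i < d \<longrightarrow> fst as \<in> I \<and> snd as \<in> R \<and> snd as \<notin> P \<and> w i = fst as / snd as"
    proof (cases "i < d")
      case True
      then have "w i \<in> loc R P I" using spanA_gen[OF A] w by blast
      then obtain a s where "a \<in> I" "s \<in> R" "s \<notin> P" "w i = a / s" using loc_elim by metis
      then show ?thesis by (intro exI[of _ "(a, s)"]) simp
    qed simp
  qed
  then obtain as where as: "\<And>i. i < d \<Longrightarrow> fst (as i) \<in> I \<and> snd (as i) \<in> R \<and> snd (as i) \<notin> P \<and> w i = fst (as i) / snd (as i)"
    by metis
  define y where "y i = fst (as i)" for i
  have yI: "\<forall>i<d. y i \<in> I" using as unfolding y_def by blast
  have "w i \<in> spanA ?A y d" if "i < d" for i
  proof -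
    have "w i = (1 / snd (as i)) * y i" using as[OF that] unfolding y_def by simp
    moreover have "1 / snd (as i) \<in> ?A" using as[OF that] loc_mem[OF sr_one[OF R]] by blast
    ultimately show ?thesis using amod_mult[OF amod_spanA[OF A]] spanA_gen[OF A that] by metis
  qed
  then have "spanA ?A w d \<subseteq> spanA ?A y d" using spanA_mono_gen[OF A] by blast
  then show ?thesis using yI w by blast
qed

lemma loc_unit_span:
  assumes R: "subring_c R" and P: "maximal_ideal_c R P" and i: "i < d" and x: "x i \<in> R" "x i \<notin> P"
  shows "loc R P R \<subseteq> spanA (loc R P R) x d"
proof
  fix z assume z: "z \<in> loc R P R"
  have "z / x i \<in> loc R P R" using loc_div[OF R P z x] by simp
  moreover have "z = (z / x i) * x i" using x notinP_nz[OF P] by simp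
  ultimately show "z \<in> spanA (loc R P R) x d"
    using amod_mult[OF amod_spanA[OF loc_subring[OF R P]]] spanA_gen[OF loc_subring[OF R P] i] by metis
qed

lemma common_denom:
  assumes R: "subring_c R" and P: "maximal_ideal_c R P" and z: "z \<in> spanA (loc R P R) x d"
  shows "\<exists>s. s \<in> R \<and> s \<notin> P \<and> s * z \<in> spanA R x d"
proof -
  obtain r where r: "z = (\<Sum>i<d. r i * x i)" "\<forall>i<d. r i \<in> loc R P R" using z unfolding spanA_def by blast
  have "\<forall>i. \<exists>as. i < d \<longrightarrow> fst as \<in> R \<and> snd as \<in> R \<and> snd as \<notin> P \<and> r i = fst as / snd as"
  proof
    fix i show "\<exists>as. i < d \<longrightarrow> fst as \<in> R \<and> snd as \<in> R \<and> snd as \<notin> P \<and> r i = fst as / snd as"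
    proof (cases "i < d")
      case True
      then obtain a s where "a \<in> R" "s \<in> R" "s \<notin> P" "r i = a / s" using loc_elim r(2) by metis
      then show ?thesis by (intro exI[of _ "(a, s)"]) simp
    qed simp
  qed
  then obtain as where as: "\<And>i. i < d \<Longrightarrow> fst (as i) \<in> R \<and> snd (as i) \<in> R \<and> snd (as i) \<notin> P \<and> r i = fst (as i) / snd (as i)"
    by metis
  define s where "s = (\<Prod>i<d. snd (as i))"
  have s: "s \<notin> P \<and> s \<in> R" unfolding s_def
    by (rule max_prod_notin[OF R P]) (use as in auto)
  have c: "s * r i = fst (as i) * (\<Prod>l\<in>{..<d} - {i}. snd (as l))" if i: "i < d" for i
  proof -
    have "s = snd (as i) * (\<Prod>l\<in>{..<d} - {i}. snd (as l))" unfolding s_def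
      using i by (simp add: prod.remove)
    moreover have "snd (as i) \<noteq> 0" using as[OF i] notinP_nz[OF P] by blast
    moreover have "r i = fst (as i) / snd (as i)" using as[OF i] by blast
    ultimately show ?thesis by simp
  qed
  have cR: "s * r i \<in> R" if i: "i < d" for i
  proof -
    have "fst (as i) \<in> R" using as[OF i] by blast
    moreover have "(\<Prod>l\<in>{..<d} - {i}. snd (as l)) \<in> R"
      by (rule sr_prod[OF R]) (use as in auto)
    ultimately show ?thesis unfolding c[OF i] by (rule sr_mult[OF R])
  qed
  have "s * z = (\<Sum>i<d. (s * r i) * x i)" unfolding r(1) by (simp add: sum_distrib_left mult.assoc)
  then have "s * z \<in> spanA R x d" using spanA_mem[of d "\<lambda>i. s * r i" R x] cR by simp
  then show ?thesis using s by blast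
qed

lemma loc_of_gen:
  assumes R: "subring_c R" and P: "maximal_ideal_c R P" and I: "I = spanA R x d"
  shows "loc R P I = spanA (loc R P R) x d"
proof
  show "loc R P I \<subseteq> spanA (loc R P R) x d"
  proof
    fix z assume "z \<in> loc R P I"
    then obtain a s where as: "a \<in> I" "s \<in> R" "s \<notin> P" "z = a / s" using loc_elim by metis
    then obtain r where r: "a = (\<Sum>i<d. r i * x i)" "\<forall>i<d. r i \<in> R" using I unfolding spanA_def by blast
    have "z = (\<Sum>i<d. (r i / s) * x i)" using as r by (simp add: sum_divide_distrib)
    moreover have "\<forall>i<d. r i / s \<in> loc R P R" using r as loc_mem by metis
    ultimately show "z \<in> spanA (loc R P R) x d" using spanA_mem[of d "\<lambda>i. r i / s" "loc R P R" x] by simp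
  qed
next
  show "spanA (loc R P R) x d \<subseteq> loc R P I"
  proof
    fix z assume "z \<in> spanA (loc R P R) x d"
    then obtain s where s: "s \<in> R" "s \<notin> P" "s * z \<in> I" using common_denom[OF R P] I by blast
    have "z = (s * z) / s" using s notinP_nz[OF P] by simp
    then show "z \<in> loc R P I" using loc_mem[OF s(3) s(1,2)] by metis
  qed
qed

lemma exists_maximal:
  assumes R: "subring_c R" and C: "ideal_c R C" "1 \<notin> C"
  shows "\<exists>P. maximal_ideal_c R P \<and> C \<subseteq> P"
proof -
  define F where "F = {J. ideal_c R J \<and> C \<subseteq> J \<and> 1 \<notin> J}"
  have "F \<noteq> {}" using C unfolding F_def by blast
  moreover have "\<Union>Ch \<in> F" if ne: "Ch \<noteq> {}" and chn: "subset.chain F Ch" for Ch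
  proof -
    have ChF: "Ch \<subseteq> F" and ch: "\<And>X Y. X \<in> Ch \<Longrightarrow> Y \<in> Ch \<Longrightarrow> X \<subseteq> Y \<or> Y \<subseteq> X"
      using chn unfolding subset.chain_def by auto
    obtain J0 where J0: "J0 \<in> Ch" using ne by blast
    have "ideal_c R (\<Union>Ch)" unfolding ideal_c_def
    proof (intro conjI ballI)
      show "\<Union>Ch \<subseteq> R" using ChF unfolding F_def ideal_c_def by blast
      show "0 \<in> \<Union>Ch" using J0 ChF unfolding F_def ideal_c_def by blast
    next
      fix x y assume "x \<in> \<Union>Ch" "y \<in> \<Union>Ch"
      then obtain X Y where XY: "X \<in> Ch" "Y \<in> Ch" "x \<in> X" "y \<in> Y" by blast
      show "x + y \<in> \<Union>Ch"
      proof (cases "X \<subseteq> Y")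
        case True
        then have "x + y \<in> Y" using XY ChF id_add unfolding F_def by blast
        then show ?thesis using XY by blast
      next
        case False
        then have "Y \<subseteq> X" using ch XY by blast
        then have "x + y \<in> X" using XY ChF id_add unfolding F_def by blast
        then show ?thesis using XY by blast
      qed
    next
      fix r x assume "r \<in> R" "x \<in> \<Union>Ch"
      then obtain X where "X \<in> Ch" "x \<in> X" by blast
      then have "r * x \<in> X" using \<open>r \<in> R\<close> ChF id_lmult unfolding F_def by blast
      then show "r * x \<in> \<Union>Ch" using \<open>X \<in> Ch\<close> by blast
    qed
    moreover have "C \<subseteq> \<Union>Ch" using J0 ChF unfolding F_def by blast
    moreover have "1 \<notin> \<Union>Ch" using ChF unfolding F_def by blast
    ultimately show ?thesis unfolding F_def by blast
  qed
  ultimately obtain M where M: "M \<in> F" "\<forall>X\<in>F. M \<subseteq> X \<longrightarrow> X = M"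
    using subset_Zorn_nonempty[of F] by blast
  have "maximal_ideal_c R M" unfolding maximal_ideal_c_def
  proof (intro conjI allI impI)
    show "ideal_c R M" using M unfolding F_def by blast
    show "M \<noteq> R" using M sr_one[OF R] unfolding F_def by blast
  next
    fix J assume J: "ideal_c R J \<and> M \<subseteq> J"
    show "J = M \<or> J = R"
    proof (cases "1 \<in> J")
      case True then show ?thesis using id_one J by blast
    next
      case False
      then have "J \<in> F" using J M unfolding F_def by blast
      then show ?thesis using M J by blast
    qed
  qed
  then show ?thesis using M unfolding F_def by blast
qed

lemma local_global:
  assumes R: "subring_c R" and J: "ideal_c R J" and z: "z \<in> R"
    and H: "\<And>P. maximal_ideal_c R P \<Longrightarrow> \<exists>s. s \<in> R \<and> s \<notin> P \<and> s * z \<in> J"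
  shows "z \<in> J"
proof (rule ccontr)
  assume nz: "z \<notin> J"
  define C where "C = {r \<in> R. r * z \<in> J}"
  have "ideal_c R C" unfolding ideal_c_def C_def
    using J R z sr_zero[OF R] id_zero[OF J] sr_add[OF R] sr_mult[OF R]
    by (auto simp: distrib_right mult.assoc intro: id_add[OF J] id_lmult[OF J])
  moreover have "1 \<notin> C" using nz unfolding C_def by simp
  ultimately obtain P where P: "maximal_ideal_c R P" "C \<subseteq> P" using exists_maximal[OF R] by blast
  obtain s where "s \<in> R" "s \<notin> P" "s * z \<in> J" using H[OF P(1)] by blast
  then show False using P(2) unfolding C_def by blast
qed



section \<open>Linear algebra over the rationals\<close>

lemma common_denominator:
  fixes a :: "nat \<Rightarrow> rat"
  shows "finite F \<Longrightarrow> \<exists>D::int. D > 0 \<and> (\<forall>k\<in>F. \<exists>m::int. a k * of_int D = of_int m)"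
proof (induction F rule: finite_induct)
  case empty then show ?case by (intro exI[of _ 1]) simp
next
  case (insert x F)
  then obtain D where D: "D > 0" "\<forall>k\<in>F. \<exists>m::int. a k * of_int D = of_int m" by blast
  obtain p q where pq: "quotient_of (a x) = (p, q)" by (cases "quotient_of (a x)") auto
  have q: "q > 0" using quotient_of_denom_pos[OF pq] .
  have ax: "a x = of_int p / of_int q" using quotient_of_div[OF pq] .
  have "\<forall>k\<in>insert x F. \<exists>m::int. a k * of_int (D * q) = of_int m"
  proof
    fix k assume "k \<in> insert x F"
    then show "\<exists>m::int. a k * of_int (D * q) = of_int m"
    proof
      assume "k = x"
      then have "a k * of_int (D * q) = of_int (p * D)" using ax q by (simp add: field_simps)
      then show ?thesis by blast
    next
      assume "k \<in> F"
      then obtain m where "a k * of_int D = of_int m" using D by blast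
      then have "a k * of_int (D * q) = of_int (m * q)" by (simp add: mult.assoc[symmetric])
      then show ?thesis by blast
    qed
  qed
  then show ?case using D q by (intro exI[of _ "D * q"]) simp
qed

lemma qvs: "vector_space (\<lambda>q (x::complex). of_rat q * x)"
  unfolding vector_space_def by (simp add: algebra_simps of_rat_add of_rat_mult)

lemma lin_dep:
  fixes B K :: "complex set" and v :: "nat \<Rightarrow> complex"
  assumes K: "finite B" "B \<subseteq> K" "\<forall>x\<in>K. \<exists>c. x = (\<Sum>b\<in>B. of_rat (c b) * b)"
    and v: "\<And>i. i \<le> card B \<Longrightarrow> v i \<in> K"
  shows "\<exists>c::nat \<Rightarrow> int. (\<exists>i\<le>card B. c i \<noteq> 0) \<and> (\<Sum>i\<le>card B. of_int (c i) * v i) = 0"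
proof -
  interpret q: vector_space "\<lambda>q (x::complex). of_rat q * x" by (rule qvs)
  let ?n = "card B"
  show ?thesis
  proof (cases "inj_on v {..?n}")
    case False
    then obtain i j where ij: "i \<le> ?n" "j \<le> ?n" "i \<noteq> j" "v i = v j" unfolding inj_on_def by auto
    define c :: "nat \<Rightarrow> int" where "c k = (if k = i then 1 else if k = j then -1 else 0)" for k
    have "(\<Sum>k\<le>?n. of_int (c k) * v k) = (\<Sum>k\<le>?n. (if k = i then v k else 0) - (if k = j then v k else 0))"
      by (rule sum.cong) (auto simp: c_def ij(3))
    also have "\<dots> = 0" using ij by (simp add: sum_subtractf)
    finally show ?thesis using ij(1) by (intro exI[of _ c]) (auto simp: c_def)
  next
    case True
    define S where "S = v ` {..?n}"
    have cS: "card S = Suc ?n" unfolding S_def using card_image[OF True] by simp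
    have fS: "finite S" unfolding S_def by simp
    have spanK: "x \<in> q.span B" if xK: "x \<in> K" for x
    proof -
      obtain c where "x = (\<Sum>b\<in>B. of_rat (c b) * b)" using K(3) xK by blast
      moreover have "(\<Sum>b\<in>B. of_rat (c b) * b) \<in> q.span B"
      proof (rule q.span_sum)
        fix b assume "b \<in> B"
        show "of_rat (c b) * b \<in> q.span B" using q.span_scale[OF q.span_base[OF \<open>b \<in> B\<close>], of "c b"] by simp
      qed
      ultimately show ?thesis by simp
    qed
    have "S \<subseteq> q.span B" unfolding S_def using v spanK by auto
    have "q.dependent S"
    proof (rule ccontr)
      assume "\<not> q.dependent S"
      then have "card S \<le> ?n" using q.independent_span_bound[OF K(1) _ \<open>S \<subseteq> q.span B\<close>] by blast
      then show False using cS by simp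
    qed
    then obtain u where u: "\<exists>w\<in>S. u w \<noteq> 0" "(\<Sum>w\<in>S. of_rat (u w) * w) = 0"
      using q.dependent_finite[OF fS] by blast
    define a where "a k = u (v k)" for k
    have sa: "(\<Sum>k\<le>?n. of_rat (a k) * v k) = 0"
      using u(2) unfolding S_def a_def sum.reindex[OF True] by (simp add: comp_def)
    obtain D :: int where D: "D > 0" "\<forall>k\<in>{..?n}. \<exists>m::int. a k * of_int D = of_int m"
      using common_denominator[of "{..?n}" a] by blast
    then have "\<forall>k. \<exists>m::int. k \<le> ?n \<longrightarrow> a k * of_int D = of_int m" by auto
    then obtain c where c: "\<And>k. k \<le> ?n \<Longrightarrow> a k * of_int D = of_int (c k)" by metis
    have "(\<Sum>k\<le>?n. of_int (c k) * v k) = (\<Sum>k\<le>?n. of_int D * (of_rat (a k) * v k))"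
    proof (rule sum.cong[OF refl])
      fix k assume "k \<in> {..?n}"
      then have "(of_int (c k) :: complex) = of_rat (of_int (c k))" by simp
      also have "\<dots> = of_rat (a k * of_int D)" using c \<open>k \<in> {..?n}\<close> by simp
      also have "\<dots> = of_rat (a k) * of_int D" by (simp add: of_rat_mult)
      finally show "of_int (c k) * v k = of_int D * (of_rat (a k) * v k)" by simp
    qed
    also have "\<dots> = 0" using sa by (simp add: sum_distrib_left[symmetric])
    finally have sc: "(\<Sum>k\<le>?n. of_int (c k) * v k) = 0" .
    obtain w where "w \<in> S" "u w \<noteq> 0" using u(1) by blast
    then obtain k where k: "k \<le> ?n" "a k \<noteq> 0" unfolding S_def a_def by auto
    then have "c k \<noteq> 0"
    proof -
      have "(of_int (c k) :: rat) = a k * of_int D" using c[OF k(1)] by simp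
      then show ?thesis using k(2) D(1) by auto
    qed
    then show ?thesis using sc k(1) by blast
  qed
qed



lemma alg_int:
  fixes B K R :: "complex set"
  assumes R: "subring_c R" and K: "finite B" "B \<subseteq> K" "\<forall>x\<in>K. \<exists>c. x = (\<Sum>b\<in>B. of_rat (c b) * b)"
    and RK: "R \<subseteq> K" and b: "b \<in> R" "b \<noteq> 0"
  shows "\<exists>N::int. N \<noteq> 0 \<and> (\<exists>r\<in>R. of_int N = b * r)"
proof -
  let ?n = "card B"
  obtain c :: "nat \<Rightarrow> int" where c: "\<exists>i\<le>?n. c i \<noteq> 0" "(\<Sum>i\<le>?n. of_int (c i) * b ^ i) = 0"
    using lin_dep[OF K, of "\<lambda>i. b ^ i"] sr_pow[OF R b(1)] RK by blast
  obtain i0 where i0: "i0 \<le> ?n" "c i0 \<noteq> 0" using c(1) by blast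
  define k where "k = (LEAST i. c i \<noteq> 0)"
  have ck: "c k \<noteq> 0" unfolding k_def using i0(2) by (rule LeastI)
  have "k \<le> i0" unfolding k_def by (rule Least_le) (rule i0(2))
  then have kn: "k \<le> ?n" using i0(1) by simp
  have low: "c i = 0" if "i < k" for i using not_less_Least[of i "\<lambda>i. c i \<noteq> 0"] that unfolding k_def by simp
  define m where "m = ?n - k"
  define f where "f i = of_int (c i) * b ^ i" for i
  have z: "\<forall>i\<in>{..?n} - {k..?n}. f i = 0"
  proof
    fix i assume "i \<in> {..?n} - {k..?n}"
    then have "i < k" by auto
    then show "f i = 0" using low unfolding f_def by simp
  qed
  have "(\<Sum>i\<le>?n. f i) = (\<Sum>i\<in>{k..?n}. f i)"
    using sum.mono_neutral_right[OF finite_atMost _ z] by auto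
  also have "\<dots> = (\<Sum>i\<in>{0 + k..m + k}. f i)" using kn unfolding m_def by simp
  also have "\<dots> = (\<Sum>j\<in>{0..m}. f (j + k))" by (rule sum.shift_bounds_cl_nat_ivl)
  also have "\<dots> = (\<Sum>j\<le>m. b ^ k * (of_int (c (j + k)) * b ^ j))"
    by (rule sum.cong) (auto simp: f_def power_add atLeast0AtMost)
  also have "\<dots> = b ^ k * (\<Sum>j\<le>m. of_int (c (j + k)) * b ^ j)" by (simp add: sum_distrib_left)
  finally have "b ^ k * (\<Sum>j\<le>m. of_int (c (j + k)) * b ^ j) = 0" using c(2) unfolding f_def by simp
  then have T: "(\<Sum>j\<le>m. of_int (c (j + k)) * b ^ j) = 0" using b(2) by simp
  define r where "r = - (\<Sum>j<m. of_int (c (Suc j + k)) * b ^ j)"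
  have "(\<Sum>j\<le>m. of_int (c (j + k)) * b ^ j) = of_int (c k) + (\<Sum>j<m. of_int (c (Suc j + k)) * b ^ Suc j)"
    by (subst sum.atMost_shift) simp
  also have "\<dots> = of_int (c k) - b * r" unfolding r_def
    by (simp add: sum_distrib_left mult.assoc mult.left_commute)
  finally have "of_int (c k) = b * r" using T by simp
  moreover have "r \<in> R" unfolding r_def
    by (intro sr_neg[OF R] sr_sum[OF R] sr_mult[OF R] sr_of_int[OF R] sr_pow[OF R b(1)])
  ultimately show ?thesis using ck by blast
qed

lemma prime_bound:
  fixes B K R :: "complex set" and p :: int
  assumes R: "subring_c R" and K: "finite B" "B \<subseteq> K" "\<forall>x\<in>K. \<exists>c. x = (\<Sum>b\<in>B. of_rat (c b) * b)"
    and RK: "R \<subseteq> K" and p: "prime p"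
    and T: "finite T" "\<And>P. P \<in> T \<Longrightarrow> maximal_ideal_c R P \<and> of_int p \<in> P"
  shows "card T \<le> card B"
proof (rule ccontr)
  let ?n = "card B"
  assume "\<not> card T \<le> ?n"
  then obtain T' where T': "T' \<subseteq> T" "card T' = Suc ?n" "finite T'"
    using obtain_subset_with_card_n[of "Suc ?n" T] by auto
  obtain h where h: "bij_betw h {0..<Suc ?n} T'" using ex_bij_betw_nat_finite[OF T'(3)] T'(2) by auto
  have hdom: "{0..<Suc ?n} = {..?n}" by auto
  have hT: "h i \<in> T'" if "i \<le> ?n" for i using h that unfolding bij_betw_def hdom by auto
  have hinj: "h i \<noteq> h j" if "i \<le> ?n" "j \<le> ?n" "i \<noteq> j" for i j
    using h that unfolding bij_betw_def inj_on_def hdom by auto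
  have Tmax: "maximal_ideal_c R Q" "of_int p \<in> Q" if "Q \<in> T'" for Q using T(2) T'(1) that by auto
  obtain E where E: "\<And>Q. Q \<in> T' \<Longrightarrow> E Q \<in> R \<and> 1 - E Q \<in> Q \<and> (\<forall>Q'\<in>T'. Q' \<noteq> Q \<longrightarrow> E Q \<in> Q')"
    using crt_fun[OF R T'(3)] Tmax by metis
  define v where "v i = E (h i)" for i
  have vR: "v i \<in> R" if "i \<le> ?n" for i using E hT that unfolding v_def by blast
  obtain c :: "nat \<Rightarrow> int" where c: "\<exists>i\<le>?n. c i \<noteq> 0" "(\<Sum>i\<le>?n. of_int (c i) * v i) = 0"
    using lin_dep[OF K, of v] vR RK by blast
  define g where "g = Gcd (c ` {..?n})"
  have g0: "g \<noteq> 0" unfolding g_def using c(1) by auto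
  have gd: "g dvd c i" if "i \<le> ?n" for i unfolding g_def using that by (intro Gcd_dvd) auto
  define c' where "c' i = c i div g" for i
  have cc: "c i = g * c' i" if "i \<le> ?n" for i unfolding c'_def using gd[OF that] by simp
  have "(of_int g :: complex) * (\<Sum>i\<le>?n. of_int (c' i) * v i) = (\<Sum>i\<le>?n. of_int (c i) * v i)"
    unfolding sum_distrib_left by (rule sum.cong) (auto simp: cc)
  then have c'0: "(\<Sum>i\<le>?n. of_int (c' i) * v i) = 0" using c(2) g0 by simp
  have "\<exists>j\<le>?n. \<not> p dvd c' j"
  proof (rule ccontr)
    assume "\<not> (\<exists>j\<le>?n. \<not> p dvd c' j)"
    then have "p * g dvd c i" if "i \<le> ?n" for i using that cc[OF that] by (auto simp: mult.commute)
    then have "p * g dvd g" unfolding g_def by (intro Gcd_greatest) (auto simp: g_def)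
    then have "p * g dvd 1 * g" by simp
    then have "p dvd 1" using dvd_times_right_cancel_iff[of g p 1] g0 by simp
    then show False using p not_prime_unit by blast
  qed
  then obtain j where j: "j \<le> ?n" "\<not> p dvd c' j" by blast
  define P where "P = h j"
  have P: "maximal_ideal_c R P" "of_int p \<in> P" "P \<in> T'" using Tmax hT[OF j(1)] unfolding P_def by auto
  have PI: "ideal_c R P" using max_ideal[OF P(1)] .
  have others: "of_int (c' i) * v i \<in> P" if "i \<in> {..?n} - {j}" for i
  proof -
    have "h i \<noteq> P" "h i \<in> T'" using hinj[of i j] hT[of i] j that unfolding P_def by auto
    then have "v i \<in> P" using E P(3) unfolding v_def by blast
    then show ?thesis using id_lmult[OF PI sr_of_int[OF R]] by blast
  qed
  have "(\<Sum>i\<le>?n. of_int (c' i) * v i) = of_int (c' j) * v j + (\<Sum>i\<in>{..?n} - {j}. of_int (c' i) * v i)"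
    using j(1) by (simp add: sum.remove)
  then have "of_int (c' j) * v j = - (\<Sum>i\<in>{..?n} - {j}. of_int (c' i) * v i)" using c'0 by (simp add: eq_neg_iff_add_eq_0)
  moreover have "- (\<Sum>i\<in>{..?n} - {j}. of_int (c' i) * v i) \<in> P"
    using id_neg[OF R PI id_sum[OF PI others]] .
  ultimately have cvP: "of_int (c' j) * v j \<in> P" by simp
  have "v j \<notin> P"
  proof
    assume "v j \<in> P"
    moreover have "1 - v j \<in> P" using E P(3) unfolding v_def P_def by blast
    ultimately have "(1 - v j) + v j \<in> P" using id_add[OF PI] by blast
    then show False using max_one[OF R P(1)] by simp
  qed
  then have cjP: "of_int (c' j) \<in> P" using max_prime'[OF R P(1) sr_of_int[OF R] vR[OF j(1)] cvP] by blast
  have "coprime p (c' j)" using prime_imp_coprime[OF p j(2)] .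
  then obtain u w where "u * p + w * c' j = 1" using bezout_int[of p "c' j"] by auto
  then have "(1::complex) = of_int u * of_int p + of_int w * of_int (c' j)"
    by (metis of_int_1 of_int_add of_int_mult)
  moreover have "of_int u * of_int p + of_int w * of_int (c' j) \<in> P"
    using P(2) cjP by (intro id_add[OF PI] id_lmult[OF PI] sr_of_int[OF R])
  ultimately show False using max_one[OF R P(1)] by simp
qed

lemma finite_over_prime:
  fixes B K R :: "complex set" and p :: int
  assumes R: "subring_c R" and K: "finite B" "B \<subseteq> K" "\<forall>x\<in>K. \<exists>c. x = (\<Sum>b\<in>B. of_rat (c b) * b)"
    and RK: "R \<subseteq> K" and p: "prime p"
  shows "finite {P. maximal_ideal_c R P \<and> of_int p \<in> P}"
proof (rule ccontr)
  assume "infinite {P. maximal_ideal_c R P \<and> of_int p \<in> P}"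
  then obtain T where "finite T" "card T = Suc (card B)" "T \<subseteq> {P. maximal_ideal_c R P \<and> of_int p \<in> P}"
    using infinite_arbitrarily_large by blast
  then show False using prime_bound[OF R K RK p, of T] by auto
qed

lemma prime_in_max:
  fixes N :: int
  assumes R: "subring_c R" and P: "maximal_ideal_c R P"
  shows "of_int N \<in> P \<Longrightarrow> N \<noteq> 0 \<Longrightarrow> \<exists>p. prime p \<and> p dvd N \<and> of_int p \<in> P"
proof (induction "nat \<bar>N\<bar>" arbitrary: N rule: less_induct)
  case less
  have PI: "ideal_c R P" using max_ideal[OF P] .
  show ?case
  proof (cases "is_unit N")
    case True
    then obtain w where "1 = N * w" by (rule dvdE)
    then have "(1::complex) = of_int w * of_int N" by (metis mult.commute of_int_1 of_int_mult)
    moreover have "of_int w * of_int N \<in> P" using id_lmult[OF PI sr_of_int[OF R] less.prems(1)] .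
    ultimately show ?thesis using max_one[OF R P] by simp
  next
    case False
    then obtain p where p: "p dvd N" "prime p" using prime_divisor_exists[OF less.prems(2)] by blast
    then obtain M where M: "N = p * M" by (auto elim: dvdE)
    have "of_int p * of_int M \<in> P" using less.prems(1) M by simp
    then have "of_int p \<in> P \<or> of_int M \<in> P" using max_prime'[OF R P sr_of_int[OF R] sr_of_int[OF R]] by blast
    then show ?thesis
    proof
      assume "of_int p \<in> P" then show ?thesis using p by blast
    next
      assume MP: "of_int M \<in> P"
      have M0: "M \<noteq> 0" using M less.prems(2) by auto
      have "\<bar>p\<bar> > 1" using prime_gt_1_int[OF p(2)] by simp
      then have "\<bar>M\<bar> < \<bar>N\<bar>" using M M0 by (simp add: abs_mult)
      then have "nat \<bar>M\<bar> < nat \<bar>N\<bar>" by simp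
      then obtain q where "prime q" "q dvd M" "of_int q \<in> P" using less.hyps MP M0 by blast
      then show ?thesis using M by auto
    qed
  qed
qed

lemma finite_max_int:
  fixes B K R :: "complex set" and N :: int
  assumes R: "subring_c R" and K: "finite B" "B \<subseteq> K" "\<forall>x\<in>K. \<exists>c. x = (\<Sum>b\<in>B. of_rat (c b) * b)"
    and RK: "R \<subseteq> K" and N: "N \<noteq> 0"
  shows "finite {P. maximal_ideal_c R P \<and> of_int N \<in> P}"
proof (rule finite_subset)
  show "{P. maximal_ideal_c R P \<and> of_int N \<in> P} \<subseteq> (\<Union>p\<in>{p. p dvd N \<and> prime p}. {P. maximal_ideal_c R P \<and> of_int p \<in> P})"
    using prime_in_max[OF R _ _ N] by blast
  show "finite (\<Union>p\<in>{p. p dvd N \<and> prime p}. {P. maximal_ideal_c R P \<and> of_int p \<in> P})"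
  proof (rule finite_UN_I)
    show "finite {p. p dvd N \<and> prime p}" using finite_divisors_int[OF N] by (rule finite_subset[rotated]) auto
    show "finite {P. maximal_ideal_c R P \<and> of_int p \<in> P}" if "p \<in> {p. p dvd N \<and> prime p}" for p
      using finite_over_prime[OF R K RK] that by blast
  qed
qed

lemma number_ring_data:
  assumes "number_ring R"
  shows "\<exists>B K. subring_c R \<and> finite B \<and> B \<subseteq> K \<and> (\<forall>x\<in>K. \<exists>c. x = (\<Sum>b\<in>B. of_rat (c b) * b)) \<and> R \<subseteq> K"
  using assms unfolding number_ring_def number_field_c_def by blast

lemma finite_max:
  assumes NR: "number_ring R" and b: "b \<in> R" "b \<noteq> 0"
  shows "finite {P. maximal_ideal_c R P \<and> b \<in> P}"
proof -
  obtain B K where R: "subring_c R" and K: "finite B" "B \<subseteq> K" "\<forall>x\<in>K. \<exists>c. x = (\<Sum>b\<in>B. of_rat (c b) * b)"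
    and RK: "R \<subseteq> K" using number_ring_data[OF NR] by blast
  obtain N r where N: "N \<noteq> 0" "r \<in> R" "of_int N = b * r" using alg_int[OF R K RK b] by blast
  have "{P. maximal_ideal_c R P \<and> b \<in> P} \<subseteq> {P. maximal_ideal_c R P \<and> of_int N \<in> P}"
    using N id_rmult max_ideal by fastforce
  then show ?thesis using finite_max_int[OF R K RK N(1)] finite_subset by blast
qed

lemma exists_int_in_ideal:
  assumes NR: "number_ring R" and I: "ideal_c R I" and a: "a \<in> I" "a \<noteq> 0"
  shows "\<exists>N::int. N \<noteq> 0 \<and> of_int N \<in> I"
proof -
  obtain B K where R: "subring_c R" and K: "finite B" "B \<subseteq> K" "\<forall>x\<in>K. \<exists>c. x = (\<Sum>b\<in>B. of_rat (c b) * b)"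
    and RK: "R \<subseteq> K" using number_ring_data[OF NR] by blast
  obtain N r where N: "N \<noteq> 0" "r \<in> R" "of_int N = a * r" using alg_int[OF R K RK id_sub[OF I a(1)] a(2)] by blast
  then show ?thesis using id_rmult[OF I N(2) a(1)] by auto
qed



lemma set_sum_closed:
  assumes "0 \<in> G" "\<And>x y. x \<in> G \<Longrightarrow> y \<in> G \<Longrightarrow> x + y \<in> G"
  shows "(\<And>i. i \<in> F \<Longrightarrow> f i \<in> G) \<Longrightarrow> sum f F \<in> G"
  by (induction F rule: infinite_finite_induct) (auto simp: assms)

lemma crt_congr:
  assumes R: "subring_c R" and S: "finite S" and P: "P \<in> S" and I: "ideal_c R I"
    and E: "\<And>Q. Q \<in> S \<Longrightarrow> E Q \<in> R \<and> 1 - E Q \<in> Q \<and> (\<forall>Q'\<in>S. Q' \<noteq> Q \<longrightarrow> E Q \<in> Q')"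
    and t: "\<And>Q. Q \<in> S \<Longrightarrow> t Q \<in> I"
    and G: "0 \<in> G" "\<And>x y. x \<in> G \<Longrightarrow> y \<in> G \<Longrightarrow> x + y \<in> G" "\<And>x. x \<in> G \<Longrightarrow> - x \<in> G"
       "\<And>p z. p \<in> P \<Longrightarrow> z \<in> I \<Longrightarrow> p * z \<in> G"
  shows "(\<Sum>Q\<in>S. E Q * t Q) - t P \<in> G"
proof -
  have "(\<Sum>Q\<in>S. E Q * t Q) = E P * t P + (\<Sum>Q\<in>S - {P}. E Q * t Q)"
    using S P by (simp add: sum.remove)
  then have eq: "(\<Sum>Q\<in>S. E Q * t Q) - t P = - ((1 - E P) * t P) + (\<Sum>Q\<in>S - {P}. E Q * t Q)"
    by (simp add: algebra_simps)
  have "- ((1 - E P) * t P) \<in> G" using G(3)[OF G(4)] E[OF P] t[OF P] by blast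
  moreover have "(\<Sum>Q\<in>S - {P}. E Q * t Q) \<in> G"
  proof (rule set_sum_closed[OF G(1) G(2)])
    fix Q assume Q: "Q \<in> S - {P}"
    then have "E Q \<in> P" using E[of Q] P by blast
    then show "E Q * t Q \<in> G" using G(4) t Q by blast
  qed
  ultimately show ?thesis unfolding eq using G(2) by blast
qed

lemma ideal_amod: "ideal_c R I \<Longrightarrow> amod R I"
  unfolding amod_def ideal_c_def by blast

lemma subring_amod: "subring_c R \<Longrightarrow> amod R R"
  unfolding amod_def using sr_zero sr_add sr_mult by blast

lemma spanM_facts:
  assumes A: "subring_c A" and M: "amod A M" "M \<subseteq> A"
  shows "0 \<in> spanA M y d" "\<And>u v. u \<in> spanA M y d \<Longrightarrow> v \<in> spanA M y d \<Longrightarrow> u + v \<in> spanA M y d"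
    "\<And>u. u \<in> spanA M y d \<Longrightarrow> - u \<in> spanA M y d"
    "\<And>p z. p \<in> M \<Longrightarrow> z \<in> spanA A y d \<Longrightarrow> p * z \<in> spanA M y d"
proof -
  show "0 \<in> spanA M y d" using spanA_mem[of d "\<lambda>_. 0" M y] amod_zero[OF M(1)] by simp
next
  fix u v assume "u \<in> spanA M y d" "v \<in> spanA M y d"
  then obtain r r' where "u = (\<Sum>i<d. r i * y i)" "\<forall>i<d. r i \<in> M" "v = (\<Sum>i<d. r' i * y i)" "\<forall>i<d. r' i \<in> M"
    unfolding spanA_def by blast
  then have "u + v = (\<Sum>i<d. (r i + r' i) * y i)" "\<forall>i<d. r i + r' i \<in> M"
    by (auto simp: sum.distrib distrib_right intro: amod_add[OF M(1)])
  then show "u + v \<in> spanA M y d" using spanA_mem[of d "\<lambda>i. r i + r' i" M y] by simp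
next
  fix u assume "u \<in> spanA M y d"
  then obtain r where r: "u = (\<Sum>i<d. r i * y i)" "\<forall>i<d. r i \<in> M"
    unfolding spanA_def by blast
  have "- 1 \<in> A" using sr_neg[OF A sr_one[OF A]] .
  then have "\<forall>i<d. (- 1) * r i \<in> M" using r(2) amod_mult[OF M(1)] by blast
  moreover have "- u = (\<Sum>i<d. ((- 1) * r i) * y i)" using r(1) by (simp add: sum_negf)
  ultimately show "- u \<in> spanA M y d" using spanA_mem[of d "\<lambda>i. (- 1) * r i" M y] by simp
next
  fix p z assume p: "p \<in> M" and z: "z \<in> spanA A y d"
  then obtain r where r: "z = (\<Sum>i<d. r i * y i)" "\<forall>i<d. r i \<in> A"
    unfolding spanA_def by blast
  have "\<forall>i<d. r i * p \<in> M" using r(2) amod_mult[OF M(1)] p by blast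
  moreover have "p * z = (\<Sum>i<d. (r i * p) * y i)" using r(1) by (simp add: sum_distrib_left algebra_simps)
  ultimately show "p * z \<in> spanA M y d" using spanA_mem[of d "\<lambda>i. r i * p" M y] by simp
qed

theorem lemma4p5:
  fixes R I :: "complex set" and d :: nat
  assumes "number_ring R" and "ideal_c R I" and "d \<ge> 2"
  shows "gen_by R I d \<longleftrightarrow>
    (\<forall>P. maximal_ideal_c R P \<longrightarrow> gen_by (loc R P R) (loc R P I) d)"
proof
  have R: "subring_c R" using assms(1) unfolding number_ring_def by blast
  note NR = assms(1) and I = assms(2) and d = assms(3)
  {
    assume "gen_by R I d"
    then obtain x where x: "I = spanA R x d" using gen_by_spanA by metis
    show "\<forall>P. maximal_ideal_c R P \<longrightarrow> gen_by (loc R P R) (loc R P I) d"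
      using loc_of_gen[OF R _ x] gen_by_spanA by metis
  }
  assume H: "\<forall>P. maximal_ideal_c R P \<longrightarrow> gen_by (loc R P R) (loc R P I) d"
  show "gen_by R I d"
  proof (cases "I = {0}")
    case True
    have "spanA R (\<lambda>_. 0) d = {0}"
      using spanA_mem[of d "\<lambda>_. 0" R "\<lambda>_. 0"] sr_zero[OF R] unfolding spanA_def by auto
    then show ?thesis using True gen_by_spanA by metis
  next
    case False
    then obtain a where a: "a \<in> I" "a \<noteq> 0" using id_zero[OF I] by blast
    obtain N :: int where N: "N \<noteq> 0" "of_int N \<in> I" using exists_int_in_ideal[OF NR I a] by blast
    define n0 :: complex where "n0 = of_int N"
    have n0: "n0 \<in> I" "n0 \<noteq> 0" "n0 \<in> R" using N id_sub[OF I] unfolding n0_def by auto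
    have "\<forall>P. \<exists>y. maximal_ideal_c R P \<longrightarrow> (\<forall>i<d. y i \<in> I) \<and> loc R P I \<subseteq> spanA (loc R P R) y d"
      using loc_gens[OF R _ I] H by blast
    then obtain Y where Y: "\<And>P. maximal_ideal_c R P \<Longrightarrow> (\<forall>i<d. Y P i \<in> I) \<and> loc R P I \<subseteq> spanA (loc R P R) (Y P) d"
      by metis
    define S1 where "S1 = {P. maximal_ideal_c R P \<and> n0 \<in> P}"
    have S1: "finite S1" "\<And>Q. Q \<in> S1 \<Longrightarrow> maximal_ideal_c R Q" unfolding S1_def
      using finite_max[OF NR n0(3) n0(2)] by auto
    obtain E1 where E1: "\<And>Q. Q \<in> S1 \<Longrightarrow> E1 Q \<in> R \<and> 1 - E1 Q \<in> Q \<and> (\<forall>Q'\<in>S1. Q' \<noteq> Q \<longrightarrow> E1 Q \<in> Q')"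
      using crt_fun[OF R S1] by metis
    define x1' where "x1' = (\<Sum>Q\<in>S1. E1 Q * Y Q 0)"
    define x1 where "x1 = (if x1' = 0 then n0 * n0 else x1')"
    have d0: "0 < d" "1 < d" using d by auto
    have x1'I: "x1' \<in> I" unfolding x1'_def
      using E1 S1(2) Y d0 by (intro id_sum[OF I] id_lmult[OF I]) auto
    have x1I: "x1 \<in> I" unfolding x1_def using x1'I n0 id_lmult[OF I n0(3) n0(1)] by auto
    have x1nz: "x1 \<noteq> 0" unfolding x1_def using n0(2) by auto
    define S2 where "S2 = {P. maximal_ideal_c R P \<and> (n0 \<in> P \<or> x1 \<in> P)}"
    have "S2 = S1 \<union> {P. maximal_ideal_c R P \<and> x1 \<in> P}" unfolding S2_def S1_def by blast
    then have S2: "finite S2" "\<And>Q. Q \<in> S2 \<Longrightarrow> maximal_ideal_c R Q" unfolding S1_def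
      using finite_max[OF NR n0(3) n0(2)] finite_max[OF NR id_sub[OF I x1I] x1nz] S2_def by auto
    obtain E2 where E2: "\<And>Q. Q \<in> S2 \<Longrightarrow> E2 Q \<in> R \<and> 1 - E2 Q \<in> Q \<and> (\<forall>Q'\<in>S2. Q' \<noteq> Q \<longrightarrow> E2 Q \<in> Q')"
      using crt_fun[OF R S2] by metis
    define t where "t Q i = (if n0 \<in> Q then Y Q i else n0)" for Q i
    have tI: "t Q i \<in> I" if "Q \<in> S2" "i < d" for Q i
      unfolding t_def using Y S2(2) that n0(1) by auto
    define X where "X i = (if i = 0 then x1 else (\<Sum>Q\<in>S2. E2 Q * t Q i))" for i
    have XI: "X i \<in> I" if "i < d" for i
      unfolding X_def using x1I E2 tI that by (auto intro!: id_sum[OF I] id_lmult[OF I])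
    have XR: "X i \<in> R" if "i < d" for i using XI[OF that] id_sub[OF I] by blast
    have local: "loc R P I \<subseteq> spanA (loc R P R) X d" if P: "maximal_ideal_c R P" for P
    proof -
      let ?A = "loc R P R"
      let ?M = "loc R P P"
      have A: "subring_c ?A" using loc_subring[OF R P] .
      have M: "amod ?A ?M" "?M \<subseteq> ?A" using locP_amod[OF R P] by auto
      have PM: "P \<subseteq> ?M" using loc_incl[OF R P] .
      have IA: "loc R P I \<subseteq> ?A" using loc_mono id_sub[OF I] by blast
      show ?thesis
      proof (cases "n0 \<in> P")
        case True
        have PS1: "P \<in> S1" unfolding S1_def using P True by blast
        have PS2: "P \<in> S2" unfolding S2_def using P True by blast
        let ?y = "Y P"
        let ?G = "spanA ?M ?y d"
        have yI: "\<forall>i<d. ?y i \<in> I" and yspan: "loc R P I \<subseteq> spanA ?A ?y d" using Y[OF P] by auto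
        note GF = spanM_facts[OF A M, where y = "Y P" and d = d]
        have G4: "p * z \<in> ?G" if pz: "p \<in> P" "z \<in> I" for p z
        proof -
          have "z \<in> spanA ?A ?y d" using yspan loc_incl[OF R P] pz(2) by blast
          then show ?thesis using GF(4) PM pz(1) by blast
        qed
        have diff: "X i - ?y i \<in> ?G" if i: "i < d" for i
        proof (cases "i = 0")
          case False
          have "X i = (\<Sum>Q\<in>S2. E2 Q * t Q i)" unfolding X_def using False by simp
          moreover have "t P i = ?y i" unfolding t_def using True by simp
          moreover have "(\<Sum>Q\<in>S2. E2 Q * t Q i) - t P i \<in> ?G"
            by (rule crt_congr[OF R S2(1) PS2 I E2, of "\<lambda>Q. t Q i"])
               (use tI i GF(1-3) G4 in auto)
          ultimately show ?thesis by simp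
        next
          case i0: True
          have c1: "x1' - ?y 0 \<in> ?G" unfolding x1'_def
            by (rule crt_congr[OF R S1(1) PS1 I E1, of "\<lambda>Q. Y Q 0"])
               (use Y S1(2) d0 GF(1-3) G4 in auto)
          show ?thesis
          proof (cases "x1' = 0")
            case False
            then show ?thesis using c1 i0 unfolding X_def x1_def by simp
          next
            case z: True
            have "n0 * n0 \<in> ?G" using G4 True n0(1) by blast
            then have "n0 * n0 + (x1' - ?y 0) \<in> ?G" using GF(2) c1 by blast
            then show ?thesis using z i0 unfolding X_def x1_def by simp
          qed
        qed
        have Xin: "X i \<in> spanA ?A X d" if "i < d" for i using spanA_gen[OF A that] .
        have "?y i \<in> spanA ?A X d" if i: "i < d" for i
        proof (rule nakayama[OF A M loc_unit[OF R P] amod_spanA[OF A] _ i])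
          fix j assume j: "j < d"
          have "?y j = X j + (- (X j - ?y j))" by simp
          moreover have "- (X j - ?y j) \<in> ?G" using GF(3) diff[OF j] by blast
          ultimately show "\<exists>a\<in>spanA ?A X d. \<exists>b\<in>?G. ?y j = a + b" using Xin[OF j] by blast
        qed
        then have "spanA ?A ?y d \<subseteq> spanA ?A X d" using spanA_mono_gen[OF A] by blast
        then show ?thesis using yspan by blast
      next
        case nP: False
        show ?thesis
        proof (cases "x1 \<in> P")
          case False
          have "X 0 \<notin> P" using False unfolding X_def by simp
          then have "?A \<subseteq> spanA ?A X d" using loc_unit_span[OF R P d0(1), of X, OF XR[OF d0(1)]] by blast
          then show ?thesis using IA by blast
        next
          case True
          have PS2: "P \<in> S2" unfolding S2_def using P True by blast
          have PI: "ideal_c R P" using max_ideal[OF P] .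
          have "(\<Sum>Q\<in>S2. E2 Q * t Q 1) - t P 1 \<in> P"
            by (rule crt_congr[OF R S2(1) PS2 I E2, of "\<lambda>Q. t Q 1"])
               (use tI d0 id_zero[OF PI] id_add[OF PI] id_neg[OF R PI] id_rmult[OF PI id_sub[OF I]] in auto)
          moreover have "t P 1 = n0" unfolding t_def using nP by simp
          ultimately have X1: "X 1 - n0 \<in> P" unfolding X_def by simp
          have "X 1 \<notin> P"
          proof
            assume "X 1 \<in> P"
            then have "X 1 - (X 1 - n0) \<in> P" using id_diff[OF R PI _ X1] by blast
            then show False using nP by simp
          qed
          then have "?A \<subseteq> spanA ?A X d" using loc_unit_span[OF R P d0(2), of X, OF XR[OF d0(2)]] by blast
          then show ?thesis using IA by blast
        qed
      qed
    qed
    define J where "J = spanA R X d"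
    have JI: "J \<subseteq> I" unfolding J_def using spanA_sub[OF ideal_amod[OF I]] XI by blast
    have Jid: "ideal_c R J"
    proof -
      have "amod R J" unfolding J_def using amod_spanA[OF R] .
      moreover have "J \<subseteq> R" using JI id_sub[OF I] by blast
      ultimately show ?thesis unfolding amod_def ideal_c_def by blast
    qed
    have "I \<subseteq> J"
    proof
      fix z assume z: "z \<in> I"
      show "z \<in> J"
      proof (rule local_global[OF R Jid id_sub[OF I z]])
        fix P assume P: "maximal_ideal_c R P"
        have "z \<in> spanA (loc R P R) X d" using local[OF P] loc_incl[OF R P] z by blast
        then show "\<exists>s. s \<in> R \<and> s \<notin> P \<and> s * z \<in> J" unfolding J_def using common_denom[OF R P] by blast
      qed
    qed
    then have "I = spanA R X d" using JI unfolding J_def by blast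
    then show ?thesis using gen_by_spanA by metis
  qed
qed

end
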